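(* Assume the input distribution is non-degenerate in the following sense: for every $\mathbf{w}\neq \mathbf{0}$ with $\theta(\mathbf{w},\mathbf{w}_* )<\pi$ one has $\mathbf{A}_{\mathbf{w},\mathbf{w}_*}\succ 0$, and for every $\mathbf{w}\neq\mathbf{0}$ with $\theta(\mathbf{w},\mathbf{w}_* )>0$ one has $\mathbf{A}_{\mathbf{w},-\mathbf{w}_*}\succ 0$. Let the initialization $\mathbf{w}_0$ satisfy $\ell(\mathbf{w}_0)<\ell(\mathbf{0})$, and run gradient descent $\mathbf{w}_{t+1}=\mathbf{w}_t-\eta_t\nabla\ell(\mathbf{w}_t)$ with step sizes for which $\ell(\mathbf{w}_t)$ is non-increasing. If the iterates converge to a point $\bar{\mathbf{w}}$ with $\nabla \ell(\bar{\mathbf{w}})=\mathbf{0}$, then $\bar{\mathbf{w}}=\mathbf{w}_*$. (Equivalently: every $\mathbf{w}$ with $\ell(\mathbf{w})<\ell(\mathbf{0})$ and $\nabla\ell(\mathbf{w})=\mathbf{0}$ equals $\mathbf{w}_*$.)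
   Context: One-neuron setting. $\mathbf{Z}\in\mathbb{R}^p$ is a random vector with a continuous distribution; $\sigma(x)=\max(x,0)$ (ReLU); $\mathbf{w}_*\in\mathbb{R}^p\setminus\{\mathbf{0}\}$ is a fixed unknown teacher vector. The population loss is $\ell(\mathbf{w})=\frac12\mathbb{E}[(\sigma(\mathbf{w}^\top\mathbf{Z})-\sigma(\mathbf{w}_*^\top\mathbf{Z}))^2]$. Define $\mathbf{A}_{\mathbf{w},\mathbf{w}_*}=\mathbb{E}[\mathbf{Z}\mathbf{Z}^\top\mathbb{I}\{\mathbf{w}^\top\mathbf{Z}\ge0,\mathbf{w}_*^\top\mathbf{Z}\ge0\}]$ and $\mathbf{A}_{\mathbf{w},-\mathbf{w}_*}=\mathbb{E}[\mathbf{Z}\mathbf{Z}^\top\mathbb{I}\{\mathbf{w}^\top\mathbf{Z}\ge0,\mathbf{w}_*^\top\mathbf{Z}\le0\}]$. For $\mathbf{w}\ne \mathbf{0}$ the population gradient is $\nabla\ell(\mathbf{w})=\mathbf{A}_{\mathbf{w},\mathbf{w}_*}(\mathbf{w}-\mathbf{w}_* )+\mathbf{A}_{\mathbf{w},-\mathbf{w}_*}\mathbf{w}$. $\theta(\mathbf{u},\mathbf{v})\in[0,\pi]$ denotes the angle between vectors $\mathbf{u},\mathbf{v}$. *)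

theory Defs
  imports "HOL-Probability.Probability"
begin

definition relu :: "real \<Rightarrow> real" where
  "relu x = max x 0"

definition vec_angle :: "real^'n \<Rightarrow> real^'n \<Rightarrow> real" where
  "vec_angle u v = arccos ((u \<bullet> v) / (norm u * norm v))"

definition pop_loss :: "'a measure \<Rightarrow> ('a \<Rightarrow> real^'n) \<Rightarrow> real^'n \<Rightarrow> real^'n \<Rightarrow> real" where
  "pop_loss M Z wstar w =
     (1/2) * (\<integral>\<omega>. (relu (w \<bullet> Z \<omega>) - relu (wstar \<bullet> Z \<omega>))^2 \<partial>M)"

definition A_pos :: "'a measure \<Rightarrow> ('a \<Rightarrow> real^'n) \<Rightarrow> real^'n \<Rightarrow> real^'n \<Rightarrow> real^'n^'n" where
  "A_pos M Z wstar w = (\<chi> i j. \<integral>\<omega>. Z \<omega> $ i * Z \<omega> $ j *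
       indicator {\<omega>. w \<bullet> Z \<omega> \<ge> 0 \<and> wstar \<bullet> Z \<omega> \<ge> 0} \<omega> \<partial>M)"

definition A_neg :: "'a measure \<Rightarrow> ('a \<Rightarrow> real^'n) \<Rightarrow> real^'n \<Rightarrow> real^'n \<Rightarrow> real^'n^'n" where
  "A_neg M Z wstar w = (\<chi> i j. \<integral>\<omega>. Z \<omega> $ i * Z \<omega> $ j *
       indicator {\<omega>. w \<bullet> Z \<omega> \<ge> 0 \<and> wstar \<bullet> Z \<omega> \<le> 0} \<omega> \<partial>M)"

definition pop_grad :: "'a measure \<Rightarrow> ('a \<Rightarrow> real^'n) \<Rightarrow> real^'n \<Rightarrow> real^'n \<Rightarrow> real^'n" where
  "pop_grad M Z wstar w = A_pos M Z wstar w *v (w - wstar) + A_neg M Z wstar w *v w"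

definition pos_def :: "real^'n^'n \<Rightarrow> bool" where
  "pos_def A \<longleftrightarrow> A = transpose A \<and> (\<forall>x. x \<noteq> 0 \<longrightarrow> x \<bullet> (A *v x) > 0)"

end

theory Submission
  imports Defs
begin

lemma comp_int:
  fixes Z :: "'a \<Rightarrow> real^'n"
  assumes Zm: "Z \<in> borel_measurable M" and I: "integrable M (\<lambda>\<omega>. (norm (Z \<omega>))\<^sup>2)"
    and Sm: "(\<lambda>\<omega>. indicator S \<omega> :: real) \<in> borel_measurable M"
  shows "integrable M (\<lambda>\<omega>. Z \<omega> $ i * Z \<omega> $ j * indicator S \<omega>)"
proof (rule Bochner_Integration.integrable_bound[OF I])
  show "(\<lambda>\<omega>. Z \<omega> $ i * Z \<omega> $ j * indicator S \<omega>) \<in> borel_measurable M"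
  proof -
    have "(\<lambda>\<omega>. Z \<omega> $ k) \<in> borel_measurable M" for k
    proof -
      have "(\<lambda>v::real^'n. v $ k) \<in> borel_measurable borel"
        by (intro borel_measurable_continuous_onI continuous_intros)
      then show ?thesis using Zm by (rule measurable_compose[rotated])
    qed
    then show ?thesis using Sm by (intro borel_measurable_times) auto
  qed
  show "AE \<omega> in M. norm (Z \<omega> $ i * Z \<omega> $ j * indicator S \<omega>) \<le> norm ((norm (Z \<omega>))\<^sup>2)"
  proof (rule AE_I2)
    fix \<omega>
    have a: "\<bar>Z \<omega> $ i\<bar> \<le> norm (Z \<omega>)" "\<bar>Z \<omega> $ j\<bar> \<le> norm (Z \<omega>)"
      using component_le_norm_cart by auto
    have "\<bar>Z \<omega> $ i * Z \<omega> $ j\<bar> \<le> norm (Z \<omega>) * norm (Z \<omega>)"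
      unfolding abs_mult using a by (simp add: mult_mono')
    then show "norm (Z \<omega> $ i * Z \<omega> $ j * indicator S \<omega>) \<le> norm ((norm (Z \<omega>))\<^sup>2)"
      by (auto simp: indicator_def power2_eq_square)
  qed
qed

lemma quad_int:
  fixes Z :: "'a \<Rightarrow> real^'n"
  assumes Zm: "Z \<in> borel_measurable M" and I: "integrable M (\<lambda>\<omega>. (norm (Z \<omega>))\<^sup>2)"
    and Sm: "(\<lambda>\<omega>. indicator S \<omega> :: real) \<in> borel_measurable M"
  shows "x \<bullet> ((\<chi> i j. \<integral>\<omega>. Z \<omega> $ i * Z \<omega> $ j * indicator S \<omega> \<partial>M) *v y)
       = (\<integral>\<omega>. (x \<bullet> Z \<omega>) * (y \<bullet> Z \<omega>) * indicator S \<omega> \<partial>M)"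
proof -
  have ci: "\<And>i j. integrable M (\<lambda>\<omega>. Z \<omega> $ i * Z \<omega> $ j * indicator S \<omega>)"
    using comp_int[OF Zm I Sm] .
  have "x \<bullet> ((\<chi> i j. \<integral>\<omega>. Z \<omega> $ i * Z \<omega> $ j * indicator S \<omega> \<partial>M) *v y)
      = (\<Sum>i\<in>UNIV. \<Sum>j\<in>UNIV. x $ i * y $ j * (\<integral>\<omega>. Z \<omega> $ i * Z \<omega> $ j * indicator S \<omega> \<partial>M))"
    by (simp add: inner_vec_def matrix_vector_mult_def sum_distrib_left mult_ac)
  also have "\<dots> = (\<Sum>i\<in>UNIV. \<Sum>j\<in>UNIV. (\<integral>\<omega>. x $ i * y $ j * (Z \<omega> $ i * Z \<omega> $ j * indicator S \<omega>) \<partial>M))"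
    by simp
  also have "\<dots> = (\<Sum>i\<in>UNIV. (\<integral>\<omega>. (\<Sum>j\<in>UNIV. x $ i * y $ j * (Z \<omega> $ i * Z \<omega> $ j * indicator S \<omega>)) \<partial>M))"
  proof (rule sum.cong[OF refl])
    fix i
    show "(\<Sum>j\<in>UNIV. (\<integral>\<omega>. x $ i * y $ j * (Z \<omega> $ i * Z \<omega> $ j * indicator S \<omega>) \<partial>M))
       = (\<integral>\<omega>. (\<Sum>j\<in>UNIV. x $ i * y $ j * (Z \<omega> $ i * Z \<omega> $ j * indicator S \<omega>)) \<partial>M)"
      by (rule Bochner_Integration.integral_sum[symmetric]) (auto intro!: ci integrable_mult_right)
  qed
  also have "\<dots> = (\<integral>\<omega>. (\<Sum>i\<in>UNIV. \<Sum>j\<in>UNIV. x $ i * y $ j * (Z \<omega> $ i * Z \<omega> $ j * indicator S \<omega>)) \<partial>M)"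
    by (subst Bochner_Integration.integral_sum) (auto intro!: ci)
  also have "\<dots> = (\<integral>\<omega>. (x \<bullet> Z \<omega>) * (y \<bullet> Z \<omega>) * indicator S \<omega> \<partial>M)"
    by (rule Bochner_Integration.integral_cong)
       (auto simp: inner_vec_def sum_distrib_left sum_distrib_right mult_ac intro: trans[OF _ sum.swap])
  finally show ?thesis .
qed

theorem theorem1:
  fixes M :: "'a measure" and Z :: "'a \<Rightarrow> real^'n"
    and wstar :: "real^'n" and w :: "nat \<Rightarrow> real^'n" and eta :: "nat \<Rightarrow> real"
    and wbar :: "real^'n"
  assumes "prob_space M"
    and "Z \<in> borel_measurable M"
    and "absolutely_continuous lborel (distr M borel Z)"
    and "integrable M (\<lambda>\<omega>. (norm (Z \<omega>))\<^sup>2)"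
    and "wstar \<noteq> 0"
    and "\<And>v. v \<noteq> 0 \<Longrightarrow> vec_angle v wstar < pi \<Longrightarrow> pos_def (A_pos M Z wstar v)"
    and "\<And>v. v \<noteq> 0 \<Longrightarrow> vec_angle v wstar > 0 \<Longrightarrow> pos_def (A_neg M Z wstar v)"
    and "pop_loss M Z wstar (w 0) < pop_loss M Z wstar 0"
    and "\<And>t. w (Suc t) = w t - eta t *\<^sub>R pop_grad M Z wstar (w t)"
    and "\<And>t. pop_loss M Z wstar (w (Suc t)) \<le> pop_loss M Z wstar (w t)"
    and "w \<longlonglongrightarrow> wbar"
    and "pop_grad M Z wstar wbar = 0"
  shows "wbar = wstar"
proof (rule ccontr)
  assume ne: "wbar \<noteq> wstar"
  note Zm = assms(2) and I = assms(4)
  define u where "u = wbar - wstar"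
  have u0: "u \<noteq> 0" using ne by (simp add: u_def)
  define P where "P = {\<omega>. wbar \<bullet> Z \<omega> \<ge> 0 \<and> wstar \<bullet> Z \<omega> \<ge> 0}"
  define Q where "Q = {\<omega>. wbar \<bullet> Z \<omega> \<ge> 0 \<and> wstar \<bullet> Z \<omega> \<le> 0}"
  have Pm: "(\<lambda>\<omega>. indicator P \<omega> :: real) \<in> borel_measurable M"
    unfolding P_def indicator_def using Zm by measurable
  have Qm: "(\<lambda>\<omega>. indicator Q \<omega> :: real) \<in> borel_measurable M"
    unfolding Q_def indicator_def using Zm by measurable
  have Aq: "\<And>x y. x \<bullet> (A_pos M Z wstar wbar *v y) = (\<integral>\<omega>. (x \<bullet> Z \<omega>) * (y \<bullet> Z \<omega>) * indicator P \<omega> \<partial>M)"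
    unfolding A_pos_def P_def[symmetric] by (rule quad_int[OF Zm I Pm])
  have Bq: "\<And>x y. x \<bullet> (A_neg M Z wstar wbar *v y) = (\<integral>\<omega>. (x \<bullet> Z \<omega>) * (y \<bullet> Z \<omega>) * indicator Q \<omega> \<partial>M)"
    unfolding A_neg_def Q_def[symmetric] by (rule quad_int[OF Zm I Qm])
  have intQ: "\<And>x y. integrable M (\<lambda>\<omega>. (x \<bullet> Z \<omega>) * (y \<bullet> Z \<omega>) * indicator Q \<omega>)"
  proof -
    fix x y :: "real^'n"
    have "integrable M (\<lambda>\<omega>. \<Sum>i\<in>UNIV. \<Sum>j\<in>UNIV. x $ i * y $ j * (Z \<omega> $ i * Z \<omega> $ j * indicator Q \<omega>))"
      using comp_int[OF Zm I Qm] by auto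
    moreover have "(\<lambda>\<omega>. \<Sum>i\<in>UNIV. \<Sum>j\<in>UNIV. x $ i * y $ j * (Z \<omega> $ i * Z \<omega> $ j * indicator Q \<omega>))
        = (\<lambda>\<omega>. (x \<bullet> Z \<omega>) * (y \<bullet> Z \<omega>) * indicator Q \<omega>)"
      by (subst sum.swap) (auto simp: inner_vec_def sum_distrib_left sum_distrib_right mult_ac)
    ultimately show "integrable M (\<lambda>\<omega>. (x \<bullet> Z \<omega>) * (y \<bullet> Z \<omega>) * indicator Q \<omega>)" by simp
  qed
  have "0 = u \<bullet> pop_grad M Z wstar wbar" using assms(12) by simp
  also have "\<dots> = u \<bullet> (A_pos M Z wstar wbar *v u) + u \<bullet> (A_neg M Z wstar wbar *v wbar)"
    by (simp add: pop_grad_def u_def inner_add_right)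
  finally have eq: "0 = u \<bullet> (A_pos M Z wstar wbar *v u) + u \<bullet> (A_neg M Z wstar wbar *v wbar)" .
  have Ap: "u \<bullet> (A_pos M Z wstar wbar *v u) \<ge> 0"
    unfolding Aq by (rule integral_nonneg_AE) (auto simp: indicator_def)
  have Bge: "u \<bullet> (A_neg M Z wstar wbar *v wbar) \<ge> wbar \<bullet> (A_neg M Z wstar wbar *v wbar)"
    unfolding Bq
  proof (rule integral_mono[OF intQ intQ])
    fix \<omega>
    have "u \<bullet> Z \<omega> = wbar \<bullet> Z \<omega> - wstar \<bullet> Z \<omega>" by (simp add: u_def inner_diff_left)
    then show "(wbar \<bullet> Z \<omega>) * (wbar \<bullet> Z \<omega>) * indicator Q \<omega> \<le> (u \<bullet> Z \<omega>) * (wbar \<bullet> Z \<omega>) * indicator Q \<omega>"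
      by (auto simp: indicator_def Q_def intro!: mult_right_mono)
  qed
  have Bp: "wbar \<bullet> (A_neg M Z wstar wbar *v wbar) \<ge> 0"
    unfolding Bq by (rule integral_nonneg_AE) (auto simp: indicator_def)
  show False
  proof (cases "wbar = 0")
    case True
    have "A_pos M Z wstar wbar = A_pos M Z wstar wstar"
      using True by (simp add: A_pos_def)
    moreover have "vec_angle wstar wstar = 0"
      using assms(5) by (simp add: vec_angle_def power2_norm_eq_inner[symmetric] power2_eq_square)
    ultimately have "pos_def (A_pos M Z wstar wbar)" using assms(6)[OF assms(5)] by simp
    then have "u \<bullet> (A_pos M Z wstar wbar *v u) > 0" using u0 by (simp add: pos_def_def)
    then show False using eq Bge Bp by linarith
  next
    case False
    show False
    proof (cases "vec_angle wbar wstar < pi")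
      case True
      then have "u \<bullet> (A_pos M Z wstar wbar *v u) > 0" using u0 assms(6)[OF False] by (simp add: pos_def_def)
      then show False using eq Bge Bp by linarith
    next
      case c: False
      then have "vec_angle wbar wstar > 0" using pi_gt_zero by linarith
      then have "wbar \<bullet> (A_neg M Z wstar wbar *v wbar) > 0" using assms(7)[OF False] False by (simp add: pos_def_def)
      then show False using eq Bge Ap by linarith
    qed
  qed
qed

end
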